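(* Let $(\mathcal{M}^n,g)$ be a mixed super quasi-Einstein manifold (notation as in the context) admitting an Einstein soliton, i.e. a Ricci-Bourguignon soliton $(g,\xi_1,\lambda,\rho)$ with $\rho=\frac12$. Then the soliton is expanding, steady, or shrinking according as $(n-2)\Psi_1-\Psi_2+\Psi_3<0$, $(n-2)\Psi_1-\Psi_2+\Psi_3=0$, or $(n-2)\Psi_1-\Psi_2+\Psi_3>0$, respectively.
   Context: $(\mathcal{M}^n,g)$, $n\ge3$, is a non-flat Riemannian manifold with Ricci tensor $\mathrm{Ric}$ and scalar curvature $r$. It is mixed super quasi-Einstein if $\mathrm{Ric}\not\equiv0$ and $\mathrm{Ric}(X,Y)=\Psi_1 g(X,Y)+\Psi_2\mathcal{A}(X)\mathcal{A}(Y)+\Psi_3\mathcal{B}(X)\mathcal{B}(Y)+\Psi_4(\mathcal{A}(X)\mathcal{B}(Y)+\mathcal{B}(X)\mathcal{A}(Y))+\Psi_5\mathcal{D}(X,Y)$, where $\Psi_i$ are smooth functions with $\Psi_2,\Psi_3,\Psi_4,\Psi_5\neq0$; $\xi_1,\xi_2$ are vector fields with $g(\xi_1,\xi_1)=g(\xi_2,\xi_2)=1$, $g(\xi_1,\xi_2)=0$; $\mathcal{A}=g(\cdot,\xi_1)$, $\mathcal{B}=g(\cdot,\xi_2)$; $\mathcal{D}$ is a symmetric trace-free $(0,2)$-tensor with $\mathcal{D}(X,\xi_1)=0$. A Ricci-Bourguignon soliton $(g,U,\lambda,\rho)$: a vector field $U$ and constants $\lambda,\rho$ with $\frac12\mathcal{L}_Ug+\mathrm{Ric}=(\lambda+\rho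 r)g$. Convention of the paper: the soliton is called expanding, steady, or shrinking according as $\lambda>0$, $\lambda=0$, or $\lambda<0$. *)

theory Defs
  imports "HOL-Analysis.Analysis"
begin

text \<open>Local-coordinate model of a Riemannian manifold: an open coordinate
domain S in R^n (n = CARD('n)), a metric given by its component matrix
g x $ i $ j, vector fields given by their components, (0,2)-tensor
fields by component matrices.\<close>

definition pd :: "'n::finite \<Rightarrow> (real^'n \<Rightarrow> real) \<Rightarrow> real^'n \<Rightarrow> real" where
  "pd k f x = deriv (\<lambda>t. f (x + t *\<^sub>R axis k 1)) 0"

fun pds :: "'n::finite list \<Rightarrow> (real^'n \<Rightarrow> real) \<Rightarrow> real^'n \<Rightarrow> real" where
  "pds [] f = f"
| "pds (k # ks) f = pd k (pds ks f)"

definition smooth_fun :: "(real^'n::finite) set \<Rightarrow> (real^'n \<Rightarrow> real) \<Rightarrow> bool" where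
  "smooth_fun S f \<longleftrightarrow> (\<forall>ks. \<forall>x\<in>S. pds ks f differentiable (at x))"

definition smooth_vf :: "(real^'n::finite) set \<Rightarrow> (real^'n \<Rightarrow> real^'n) \<Rightarrow> bool" where
  "smooth_vf S U \<longleftrightarrow> (\<forall>i. smooth_fun S (\<lambda>x. U x $ i))"

definition smooth_tensor :: "(real^'n::finite) set \<Rightarrow> (real^'n \<Rightarrow> real^'n^'n) \<Rightarrow> bool" where
  "smooth_tensor S T \<longleftrightarrow> (\<forall>i j. smooth_fun S (\<lambda>x. T x $ i $ j))"

definition riemannian_metric :: "(real^'n::finite) set \<Rightarrow> (real^'n \<Rightarrow> real^'n^'n) \<Rightarrow> bool" where
  "riemannian_metric S g \<longleftrightarrow> open S \<and> smooth_tensor S g \<and>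
     (\<forall>x\<in>S. transpose (g x) = g x \<and> (\<forall>v. v \<noteq> 0 \<longrightarrow> v \<bullet> (g x *v v) > 0))"

definition tens :: "real^'n^'n \<Rightarrow> real^'n \<Rightarrow> real^'n \<Rightarrow> real" where
  "tens T X Y = (\<Sum>i\<in>UNIV. \<Sum>j\<in>UNIV. T $ i $ j * X $ i * Y $ j)"

definition ginv :: "(real^'n \<Rightarrow> real^'n^'n) \<Rightarrow> real^'n \<Rightarrow> real^'n^'n::finite" where
  "ginv g x = matrix_inv (g x)"

definition christoffel :: "(real^'n \<Rightarrow> real^'n^'n) \<Rightarrow> 'n::finite \<Rightarrow> 'n \<Rightarrow> 'n \<Rightarrow> real^'n \<Rightarrow> real" where
  "christoffel g k i j x = (1/2) * (\<Sum>l\<in>UNIV. ginv g x $ k $ l *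
      (pd i (\<lambda>y. g y $ j $ l) x + pd j (\<lambda>y. g y $ i $ l) x - pd l (\<lambda>y. g y $ i $ j) x))"

definition riemann :: "(real^'n \<Rightarrow> real^'n^'n) \<Rightarrow> 'n::finite \<Rightarrow> 'n \<Rightarrow> 'n \<Rightarrow> 'n \<Rightarrow> real^'n \<Rightarrow> real" where
  "riemann g r s m v x =
     pd m (christoffel g r v s) x - pd v (christoffel g r m s) x
     + (\<Sum>l\<in>UNIV. christoffel g r m l x * christoffel g l v s x
                 - christoffel g r v l x * christoffel g l m s x)"

definition ricci :: "(real^'n \<Rightarrow> real^'n^'n) \<Rightarrow> real^'n \<Rightarrow> real^'n^'n::finite" where
  "ricci g x = (\<chi> s v. \<Sum>r\<in>UNIV. riemann g r s r v x)"

definition scalar_curv :: "(real^'n \<Rightarrow> real^'n^'n) \<Rightarrow> real^'n::finite \<Rightarrow> real" where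
  "scalar_curv g x = (\<Sum>i\<in>UNIV. \<Sum>j\<in>UNIV. ginv g x $ i $ j * ricci g x $ i $ j)"

definition flat :: "(real^'n::finite) set \<Rightarrow> (real^'n \<Rightarrow> real^'n^'n) \<Rightarrow> bool" where
  "flat S g \<longleftrightarrow> (\<forall>x\<in>S. \<forall>r s m v. riemann g r s m v x = 0)"

definition lie_g :: "(real^'n \<Rightarrow> real^'n) \<Rightarrow> (real^'n \<Rightarrow> real^'n^'n) \<Rightarrow> real^'n \<Rightarrow> real^'n^'n::finite" where
  "lie_g U g x = (\<chi> i j. \<Sum>k\<in>UNIV. U x $ k * pd k (\<lambda>y. g y $ i $ j) x
        + g x $ k $ j * pd i (\<lambda>y. U y $ k) x + g x $ i $ k * pd j (\<lambda>y. U y $ k) x)"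

definition dual1 :: "(real^'n \<Rightarrow> real^'n^'n) \<Rightarrow> (real^'n \<Rightarrow> real^'n) \<Rightarrow> real^'n \<Rightarrow> real^'n::finite" where
  "dual1 g xi x = g x *v xi x"

definition mixed_super_quasi_einstein ::
  "(real^'n::finite) set \<Rightarrow> (real^'n \<Rightarrow> real^'n^'n) \<Rightarrow> (real^'n \<Rightarrow> real) \<Rightarrow> (real^'n \<Rightarrow> real)
   \<Rightarrow> (real^'n \<Rightarrow> real) \<Rightarrow> (real^'n \<Rightarrow> real) \<Rightarrow> (real^'n \<Rightarrow> real)
   \<Rightarrow> (real^'n \<Rightarrow> real^'n) \<Rightarrow> (real^'n \<Rightarrow> real^'n) \<Rightarrow> (real^'n \<Rightarrow> real^'n^'n) \<Rightarrow> bool" where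
  "mixed_super_quasi_einstein S g \<Psi>1 \<Psi>2 \<Psi>3 \<Psi>4 \<Psi>5 \<xi>1 \<xi>2 D \<longleftrightarrow>
     riemannian_metric S g \<and>
     smooth_fun S \<Psi>1 \<and> smooth_fun S \<Psi>2 \<and> smooth_fun S \<Psi>3 \<and> smooth_fun S \<Psi>4 \<and> smooth_fun S \<Psi>5 \<and>
     (\<forall>x\<in>S. \<Psi>2 x \<noteq> 0 \<and> \<Psi>3 x \<noteq> 0 \<and> \<Psi>4 x \<noteq> 0 \<and> \<Psi>5 x \<noteq> 0) \<and>
     smooth_vf S \<xi>1 \<and> smooth_vf S \<xi>2 \<and> smooth_tensor S D \<and>
     (\<forall>x\<in>S. tens (g x) (\<xi>1 x) (\<xi>1 x) = 1 \<and> tens (g x) (\<xi>2 x) (\<xi>2 x) = 1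
             \<and> tens (g x) (\<xi>1 x) (\<xi>2 x) = 0) \<and>
     (\<forall>x\<in>S. transpose (D x) = D x
             \<and> (\<Sum>i\<in>UNIV. \<Sum>j\<in>UNIV. ginv g x $ i $ j * D x $ i $ j) = 0
             \<and> (\<forall>X. tens (D x) X (\<xi>1 x) = 0)) \<and>
     (\<exists>x\<in>S. ricci g x \<noteq> 0) \<and>
     (\<forall>x\<in>S. \<forall>X Y. tens (ricci g x) X Y =
         \<Psi>1 x * tens (g x) X Y
       + \<Psi>2 x * (X \<bullet> dual1 g \<xi>1 x) * (Y \<bullet> dual1 g \<xi>1 x)
       + \<Psi>3 x * (X \<bullet> dual1 g \<xi>2 x) * (Y \<bullet> dual1 g \<xi>2 x)
       + \<Psi>4 x * ((X \<bullet> dual1 g \<xi>1 x) * (Y \<bullet> dual1 g \<xi>2 x) + (X \<bullet> dual1 g \<xi>2 x) * (Y \<bullet> dual1 g \<xi>1 x))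
       + \<Psi>5 x * tens (D x) X Y)"

definition ricci_bourguignon_soliton ::
  "(real^'n::finite) set \<Rightarrow> (real^'n \<Rightarrow> real^'n^'n) \<Rightarrow> (real^'n \<Rightarrow> real^'n) \<Rightarrow> real \<Rightarrow> real \<Rightarrow> bool" where
  "ricci_bourguignon_soliton S g U lam \<rho> \<longleftrightarrow> smooth_vf S U \<and>
     (\<forall>x\<in>S. \<forall>X Y. (1/2) * tens (lie_g U g x) X Y + tens (ricci g x) X Y
                  = (lam + \<rho> * scalar_curv g x) * tens (g x) X Y)"

text \<open>Paper's convention.\<close>
definition expanding :: "real \<Rightarrow> bool" where "expanding lam \<longleftrightarrow> lam > 0"
definition steady :: "real \<Rightarrow> bool" where "steady lam \<longleftrightarrow> lam = 0"
definition shrinking :: "real \<Rightarrow> bool" where "shrinking lam \<longleftrightarrow> lam < 0"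

end

theory Submission
  imports Defs
begin

lemma pd_hd:
  fixes f :: "real^'n::finite \<Rightarrow> real"
  assumes "(f has_derivative F) (at x)"
  shows "pd k f x = F (axis k 1)"
proof -
  have lin: "linear F" using assms has_derivative_linear by blast
  have "((\<lambda>t. x + t *\<^sub>R axis k 1) has_derivative (\<lambda>t. t *\<^sub>R axis k (1::real))) (at 0)"
    by (intro derivative_eq_intros) auto
  moreover have "(f has_derivative F) (at ((\<lambda>t. x + t *\<^sub>R axis k 1) 0))" using assms by simp
  ultimately have "((\<lambda>t. f (x + t *\<^sub>R axis k 1)) has_derivative (\<lambda>t. F (t *\<^sub>R axis k 1))) (at 0)"
    using diff_chain_at[of "\<lambda>t. x + t *\<^sub>R axis k 1" _ 0 f F] by (simp add: o_def)
  moreover have "(\<lambda>t. F (t *\<^sub>R axis k 1)) = (*) (F (axis k 1))"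
    using linear_scale[OF lin] by (auto simp: fun_eq_iff)
  ultimately have "((\<lambda>t. f (x + t *\<^sub>R axis k 1)) has_field_derivative F (axis k 1)) (at 0)"
    by (simp add: has_field_derivative_def)
  then show ?thesis unfolding pd_def by (rule DERIV_imp_deriv)
qed

lemma vec_expand: "(\<Sum>k\<in>UNIV. (v::real^'n::finite) $ k *\<^sub>R axis k 1) = v"
  by (simp add: vec_eq_iff axis_def sum_component if_distrib cong: if_cong)

lemma lin_expand:
  assumes "linear F"
  shows "F (v::real^'n::finite) = (\<Sum>k\<in>UNIV. v $ k * F (axis k 1))"
proof -
  have "F v = F (\<Sum>k\<in>UNIV. v $ k *\<^sub>R axis k 1)" by (simp add: vec_expand)
  also have "\<dots> = (\<Sum>k\<in>UNIV. v $ k * F (axis k 1))"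
    using assms by (simp add: linear_sum linear_scale)
  finally show ?thesis .
qed

lemma tens_axis: "tens T (axis i 1) (axis j 1) = T $ i $ j"
proof -
  have "\<And>ia ja. T$ia$ja * (axis i 1 :: real^'a) $ ia * (axis j 1 :: real^'a) $ ja
     = (if ja = j then (if ia = i then T$i$j else 0) else 0)" by (auto simp: axis_def)
  then show ?thesis by (simp add: tens_def)
qed

lemma tens_inner: "tens T X Y = X \<bullet> (T *v Y)"
  by (simp add: tens_def inner_vec_def matrix_vector_mult_def sum_distrib_left mult_ac)

lemma sum_inner_mat: "(\<Sum>i\<in>UNIV. \<Sum>j\<in>UNIV. M $ i $ j * A $ i * C $ j) = A \<bullet> (M *v (C::real^'n::finite))"
  by (simp add: inner_vec_def matrix_vector_mult_def sum_distrib_left mult_ac)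

lemma lie_zero:
  fixes g :: "real^'n::finite \<Rightarrow> real^'n^'n" and \<xi> :: "real^'n \<Rightarrow> real^'n"
  assumes S: "open S" "x \<in> S" and sg: "smooth_tensor S g" and sx: "smooth_vf S \<xi>"
    and one: "\<forall>y\<in>S. tens (g y) (\<xi> y) (\<xi> y) = 1"
  shows "tens (lie_g \<xi> g x) (\<xi> x) (\<xi> x) = 0"
proof -
  define Gd where "Gd i j = frechet_derivative (\<lambda>y. g y$i$j) (at x)" for i j
  define Xd where "Xd i = frechet_derivative (\<lambda>y. \<xi> y$i) (at x)" for i
  define a where "a = \<xi> x"
  have gdiff: "(\<lambda>y. g y$i$j) differentiable (at x)" for i j
    using sg S unfolding smooth_tensor_def smooth_fun_def by (metis pds.simps(1))
  have xdiff: "(\<lambda>y. \<xi> y$i) differentiable (at x)" for i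
    using sx S unfolding smooth_vf_def smooth_fun_def by (metis pds.simps(1))
  have G: "((\<lambda>y. g y$i$j) has_derivative Gd i j) (at x)" for i j
    unfolding Gd_def using gdiff frechet_derivative_works by blast
  have X: "((\<lambda>y. \<xi> y$i) has_derivative Xd i) (at x)" for i
    unfolding Xd_def using xdiff frechet_derivative_works by blast
  define H where "H v = (\<Sum>i\<in>UNIV. \<Sum>j\<in>UNIV. Gd i j v * a$i * a$j + g x$i$j * Xd i v * a$j + g x$i$j * a$i * Xd j v)" for v
  have hd0: "((\<lambda>y. \<Sum>i\<in>UNIV. \<Sum>j\<in>UNIV. g y$i$j * \<xi> y$i * \<xi> y$j) has_derivative
     (\<lambda>v. \<Sum>i\<in>UNIV. \<Sum>j\<in>UNIV. g x$i$j * \<xi> x$i * Xd j v + (g x$i$j * Xd i v + Gd i j v * \<xi> x$i) * \<xi> x$j)) (at x)"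
    by (intro has_derivative_sum has_derivative_mult G X)
  have Heq: "(\<lambda>v. \<Sum>i\<in>UNIV. \<Sum>j\<in>UNIV. g x$i$j * \<xi> x$i * Xd j v + (g x$i$j * Xd i v + Gd i j v * \<xi> x$i) * \<xi> x$j) = H"
    unfolding H_def a_def by (intro ext sum.cong refl) (simp add: algebra_simps)
  have hd: "((\<lambda>y. \<Sum>i\<in>UNIV. \<Sum>j\<in>UNIV. g y$i$j * \<xi> y$i * \<xi> y$j) has_derivative H) (at x)"
    using hd0 unfolding Heq .
  have one': "(\<Sum>i\<in>UNIV. \<Sum>j\<in>UNIV. g y$i$j * \<xi> y$i * \<xi> y$j) = 1" if "y \<in> S" for y
    using one that unfolding tens_def by blast
  have "((\<lambda>y. 1) has_derivative H) (at x)"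
    using has_derivative_transform_within_open[OF hd S, of "\<lambda>y. 1"] one' by blast
  then have "H = (\<lambda>_. 0)" using has_derivative_unique has_derivative_const by blast
  then have H0: "H a = 0" by simp
  define P where "P k i j = pd k (\<lambda>y. g y$i$j) x" for k i j
  define Q where "Q k i = pd k (\<lambda>y. \<xi> y$i) x" for k i
  have Ga: "Gd i j a = (\<Sum>k\<in>UNIV. a$k * P k i j)" for i j
    unfolding P_def using lin_expand[OF has_derivative_linear[OF G], where v=a] pd_hd[OF G] by presburger
  have Xa: "Xd i a = (\<Sum>k\<in>UNIV. a$k * Q k i)" for i
    unfolding Q_def using lin_expand[OF has_derivative_linear[OF X], where v=a] pd_hd[OF X] by presburger
  have t1: "(\<Sum>i\<in>UNIV. \<Sum>j\<in>UNIV. \<Sum>k\<in>UNIV. g x$k$j * Q i k * a$i * a$j)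
      = (\<Sum>i\<in>UNIV. \<Sum>j\<in>UNIV. g x$i$j * (\<Sum>k\<in>UNIV. a$k * Q k i) * a$j)"
  proof -
    have "(\<Sum>i\<in>UNIV. \<Sum>j\<in>UNIV. \<Sum>k\<in>UNIV. g x$k$j * Q i k * a$i * a$j)
       = (\<Sum>i\<in>UNIV. \<Sum>k\<in>UNIV. \<Sum>j\<in>UNIV. g x$k$j * Q i k * a$i * a$j)"
      by (rule sum.cong[OF refl], rule sum.swap)
    also have "\<dots> = (\<Sum>k\<in>UNIV. \<Sum>i\<in>UNIV. \<Sum>j\<in>UNIV. g x$k$j * Q i k * a$i * a$j)"
      by (rule sum.swap)
    also have "\<dots> = (\<Sum>k\<in>UNIV. \<Sum>j\<in>UNIV. \<Sum>i\<in>UNIV. g x$k$j * Q i k * a$i * a$j)"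
      by (rule sum.cong[OF refl], rule sum.swap)
    also have "\<dots> = (\<Sum>i\<in>UNIV. \<Sum>j\<in>UNIV. g x$i$j * (\<Sum>k\<in>UNIV. a$k * Q k i) * a$j)"
      by (intro sum.cong refl) (simp add: sum_distrib_left sum_distrib_right mult_ac)
    finally show ?thesis .
  qed
  have t2: "(\<Sum>i\<in>UNIV. \<Sum>j\<in>UNIV. \<Sum>k\<in>UNIV. g x$i$k * Q j k * a$i * a$j)
      = (\<Sum>i\<in>UNIV. \<Sum>j\<in>UNIV. g x$i$j * a$i * (\<Sum>k\<in>UNIV. a$k * Q k j))"
  proof -
    have "(\<Sum>i\<in>UNIV. \<Sum>j\<in>UNIV. \<Sum>k\<in>UNIV. g x$i$k * Q j k * a$i * a$j)
       = (\<Sum>i\<in>UNIV. \<Sum>k\<in>UNIV. \<Sum>j\<in>UNIV. g x$i$k * Q j k * a$i * a$j)"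
      by (rule sum.cong[OF refl], rule sum.swap)
    also have "\<dots> = (\<Sum>i\<in>UNIV. \<Sum>j\<in>UNIV. g x$i$j * a$i * (\<Sum>k\<in>UNIV. a$k * Q k j))"
      by (intro sum.cong refl) (simp add: sum_distrib_left sum_distrib_right mult_ac)
    finally show ?thesis .
  qed
  have "tens (lie_g \<xi> g x) a a = (\<Sum>i\<in>UNIV. \<Sum>j\<in>UNIV.
      (\<Sum>k\<in>UNIV. a$k * P k i j) * a$i * a$j)
     + (\<Sum>i\<in>UNIV. \<Sum>j\<in>UNIV. \<Sum>k\<in>UNIV. g x$k$j * Q i k * a$i * a$j)
     + (\<Sum>i\<in>UNIV. \<Sum>j\<in>UNIV. \<Sum>k\<in>UNIV. g x$i$k * Q j k * a$i * a$j)" (is "_ = ?rhs")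
  proof -
    have "tens (lie_g \<xi> g x) a a = (\<Sum>i\<in>UNIV. \<Sum>j\<in>UNIV.
      (\<Sum>k\<in>UNIV. a$k * P k i j + g x $ k $ j * Q i k + g x $ i $ k * Q j k) * a$i * a$j)"
      unfolding tens_def lie_g_def P_def Q_def a_def by simp
    also have "\<dots> = (\<Sum>i\<in>UNIV. \<Sum>j\<in>UNIV.
      (\<Sum>k\<in>UNIV. a$k * P k i j) * a$i * a$j
     + (\<Sum>k\<in>UNIV. g x$k$j * Q i k * a$i * a$j)
     + (\<Sum>k\<in>UNIV. g x$i$k * Q j k * a$i * a$j))"
      by (intro sum.cong refl) (simp add: sum.distrib sum_distrib_right distrib_right)
    also have "\<dots> = ?rhs"
      by (simp only: sum.distrib)
    finally show ?thesis .
  qed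
  also have "\<dots> = H a"
    unfolding t1 t2 H_def Ga Xa by (simp only: sum.distrib)
  finally show ?thesis using H0 a_def by simp
qed

lemma tens_sym: "transpose T = T \<Longrightarrow> tens T X Y = tens T Y X"
proof -
  assume T: "transpose T = T"
  have Tij: "T $ i $ j = T $ j $ i" for i j
    by (metis T transpose_def vec_lambda_beta)
  have "tens T X Y = (\<Sum>j\<in>UNIV. \<Sum>i\<in>UNIV. T $ i $ j * X $ i * Y $ j)"
    unfolding tens_def by (rule sum.swap)
  also have "\<dots> = tens T Y X" unfolding tens_def
    by (intro sum.cong refl) (simp add: Tij[of _ _] mult_ac)
  finally show ?thesis .
qed

theorem mainTheorem8:
  fixes S :: "(real^'n::finite) set"
    and g :: "real^'n \<Rightarrow> real^'n^'n"
    and \<Psi>1 \<Psi>2 \<Psi>3 \<Psi>4 \<Psi>5 :: "real^'n \<Rightarrow> real"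
    and \<xi>1 \<xi>2 :: "real^'n \<Rightarrow> real^'n"
    and D :: "real^'n \<Rightarrow> real^'n^'n"
    and lam :: real
  assumes dim: "CARD('n) \<ge> 3"
    and nonflat: "\<not> flat S g"
    and msqe: "mixed_super_quasi_einstein S g \<Psi>1 \<Psi>2 \<Psi>3 \<Psi>4 \<Psi>5 \<xi>1 \<xi>2 D"
    and sol: "ricci_bourguignon_soliton S g \<xi>1 lam (1/2)"
  shows "\<forall>x\<in>S.
     (expanding lam \<longleftrightarrow> (real CARD('n) - 2) * \<Psi>1 x - \<Psi>2 x + \<Psi>3 x < 0) \<and>
     (steady lam \<longleftrightarrow> (real CARD('n) - 2) * \<Psi>1 x - \<Psi>2 x + \<Psi>3 x = 0) \<and>
     (shrinking lam \<longleftrightarrow> (real CARD('n) - 2) * \<Psi>1 x - \<Psi>2 x + \<Psi>3 x > 0)"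
proof
  fix x assume x: "x \<in> S"
  have rm: "riemannian_metric S g" and sx: "smooth_vf S \<xi>1"
    and unit: "\<forall>y\<in>S. tens (g y) (\<xi>1 y) (\<xi>1 y) = 1 \<and> tens (g y) (\<xi>2 y) (\<xi>2 y) = 1
             \<and> tens (g y) (\<xi>1 y) (\<xi>2 y) = 0"
    and Dp: "\<forall>y\<in>S. transpose (D y) = D y
             \<and> (\<Sum>i\<in>UNIV. \<Sum>j\<in>UNIV. ginv g y $ i $ j * D y $ i $ j) = 0
             \<and> (\<forall>X. tens (D y) X (\<xi>1 y) = 0)"
    and ric: "\<forall>y\<in>S. \<forall>X Y. tens (ricci g y) X Y =
         \<Psi>1 y * tens (g y) X Y
       + \<Psi>2 y * (X \<bullet> dual1 g \<xi>1 y) * (Y \<bullet> dual1 g \<xi>1 y)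
       + \<Psi>3 y * (X \<bullet> dual1 g \<xi>2 y) * (Y \<bullet> dual1 g \<xi>2 y)
       + \<Psi>4 y * ((X \<bullet> dual1 g \<xi>1 y) * (Y \<bullet> dual1 g \<xi>2 y) + (X \<bullet> dual1 g \<xi>2 y) * (Y \<bullet> dual1 g \<xi>1 y))
       + \<Psi>5 y * tens (D y) X Y"
    using msqe unfolding mixed_super_quasi_einstein_def by blast+
  have op: "open S" and st: "smooth_tensor S g" and sym: "transpose (g x) = g x"
    and pos: "\<And>v. v \<noteq> 0 \<Longrightarrow> v \<bullet> (g x *v v) > 0"
    using rm x unfolding riemannian_metric_def by auto
  have soleq: "\<And>X Y. (1/2) * tens (lie_g \<xi>1 g x) X Y + tens (ricci g x) X Y
                  = (lam + (1/2) * scalar_curv g x) * tens (g x) X Y"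
    using sol x unfolding ricci_bourguignon_soliton_def by blast
  define a where "a = \<xi>1 x"
  define b where "b = \<xi>2 x"
  define G where "G = g x"
  define M where "M = ginv g x"
  define A where "A = G *v a"
  define B where "B = G *v b"
  have dA: "dual1 g \<xi>1 x = A" and dB: "dual1 g \<xi>2 x = B"
    unfolding dual1_def A_def B_def G_def a_def b_def by simp_all
  have gaa: "tens G a a = 1" and gbb: "tens G b b = 1" and gab: "tens G a b = 0"
    using unit x unfolding G_def a_def b_def by auto
  have gba: "tens G b a = 0" using gab tens_sym[OF sym] unfolding G_def by simp
  have lie0: "tens (lie_g \<xi>1 g x) a a = 0"
    unfolding a_def by (rule lie_zero[OF op x st sx]) (use unit in blast)
  have Daa: "tens (D x) a a = 0" using Dp x unfolding a_def by blast
  have aA: "a \<bullet> A = 1" using gaa unfolding A_def tens_inner .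
  have aB: "a \<bullet> B = 0" using gab unfolding B_def tens_inner .
  have bB: "b \<bullet> B = 1" using gbb unfolding B_def tens_inner .
  have bA: "b \<bullet> A = 0" using gba unfolding A_def tens_inner .
  have ricx: "\<And>X Y. tens (ricci g x) X Y = \<Psi>1 x * tens G X Y
       + \<Psi>2 x * (X \<bullet> A) * (Y \<bullet> A) + \<Psi>3 x * (X \<bullet> B) * (Y \<bullet> B)
       + \<Psi>4 x * ((X \<bullet> A) * (Y \<bullet> B) + (X \<bullet> B) * (Y \<bullet> A))
       + \<Psi>5 x * tens (D x) X Y"
    using ric x unfolding dA[symmetric] dB[symmetric] G_def by blast
  have Raa: "tens (ricci g x) a a = \<Psi>1 x + \<Psi>2 x"
    unfolding ricx by (simp add: gaa aA aB Daa)
  have "\<forall>v. G *v v = 0 \<longrightarrow> v = 0"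
    using pos unfolding G_def by (metis inner_zero_right less_irrefl)
  then have "\<exists>C. C ** G = mat 1" using matrix_left_invertible_ker by blast
  then have "invertible G" using invertible_left_inverse by blast
  then have MG: "M ** G = mat 1"
    unfolding M_def ginv_def G_def[symmetric] invertible_def matrix_inv_def
    by (metis (mono_tags, lifting) someI_ex)
  have Gsym: "G $ i $ j = G $ j $ i" for i j
    using sym unfolding G_def by (metis transpose_def vec_lambda_beta)
  have s1: "(\<Sum>i\<in>UNIV. \<Sum>j\<in>UNIV. M $ i $ j * G $ i $ j) = real CARD('n)"
  proof -
    have "(\<Sum>j\<in>UNIV. M $ i $ j * G $ i $ j) = 1" for i
    proof -
      have "(\<Sum>j\<in>UNIV. M $ i $ j * G $ i $ j) = (M ** G) $ i $ i"
        unfolding matrix_matrix_mult_def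
        using tens_sym by (simp add: Gsym[of i])
      then show ?thesis using MG by (simp add: mat_def)
    qed
    then show ?thesis by simp
  qed
  have s2: "(\<Sum>i\<in>UNIV. \<Sum>j\<in>UNIV. M $ i $ j * A $ i * A $ j) = 1"
    unfolding sum_inner_mat using aA
    by (simp add: A_def matrix_vector_mul_assoc MG inner_commute)
  have s3: "(\<Sum>i\<in>UNIV. \<Sum>j\<in>UNIV. M $ i $ j * B $ i * B $ j) = 1"
    unfolding sum_inner_mat using bB
    by (simp add: B_def matrix_vector_mul_assoc MG inner_commute)
  have s4: "(\<Sum>i\<in>UNIV. \<Sum>j\<in>UNIV. M $ i $ j * A $ i * B $ j) = 0"
    unfolding sum_inner_mat using bA
    by (simp add: B_def matrix_vector_mul_assoc MG inner_commute)
  have s5: "(\<Sum>i\<in>UNIV. \<Sum>j\<in>UNIV. M $ i $ j * B $ i * A $ j) = 0"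
    unfolding sum_inner_mat using aB
    by (simp add: A_def matrix_vector_mul_assoc MG inner_commute)
  have s6: "(\<Sum>i\<in>UNIV. \<Sum>j\<in>UNIV. M $ i $ j * D x $ i $ j) = 0"
    using Dp x unfolding M_def by blast
  have Rij: "ricci g x $ i $ j = \<Psi>1 x * G $ i $ j + \<Psi>2 x * A $ i * A $ j + \<Psi>3 x * B $ i * B $ j
     + \<Psi>4 x * (A $ i * B $ j + B $ i * A $ j) + \<Psi>5 x * D x $ i $ j" for i j
    using ricx[of "axis i 1" "axis j 1"] unfolding tens_axis
    by (simp add: inner_commute[of "axis _ _"] cart_eq_inner_axis[symmetric])
  have "\<And>i j. M $ i $ j * ricci g x $ i $ j = \<Psi>1 x * (M $ i $ j * G $ i $ j)
     + \<Psi>2 x * (M $ i $ j * A $ i * A $ j) + \<Psi>3 x * (M $ i $ j * B $ i * B $ j)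
     + \<Psi>4 x * (M $ i $ j * A $ i * B $ j) + \<Psi>4 x * (M $ i $ j * B $ i * A $ j)
     + \<Psi>5 x * (M $ i $ j * D x $ i $ j)"
    unfolding Rij by (simp add: algebra_simps)
  then have r: "scalar_curv g x = \<Psi>1 x * real CARD('n) + \<Psi>2 x + \<Psi>3 x"
    unfolding scalar_curv_def M_def[symmetric]
    by (simp only: sum.distrib sum_distrib_left[symmetric] s1 s2 s3 s4 s5 s6)
  have "(1/2) * 0 + (\<Psi>1 x + \<Psi>2 x) = (lam + (1/2) * scalar_curv g x) * 1"
    using soleq[of a a] lie0 Raa gaa unfolding G_def by simp
  then have key: "(real CARD('n) - 2) * \<Psi>1 x - \<Psi>2 x + \<Psi>3 x = -2 * lam"
    unfolding r by (simp add: algebra_simps)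
  show "(expanding lam \<longleftrightarrow> (real CARD('n) - 2) * \<Psi>1 x - \<Psi>2 x + \<Psi>3 x < 0) \<and>
     (steady lam \<longleftrightarrow> (real CARD('n) - 2) * \<Psi>1 x - \<Psi>2 x + \<Psi>3 x = 0) \<and>
     (shrinking lam \<longleftrightarrow> (real CARD('n) - 2) * \<Psi>1 x - \<Psi>2 x + \<Psi>3 x > 0)"
    unfolding expanding_def steady_def shrinking_def key by auto
qed

end
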